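(* For all integers $n\geq 0$ and $i\geq 1$, \begin{align*} \bar a_{2i}(4n+3)&\equiv 0 \pmod 4, & \bar a_{2i}(8n+6)&\equiv 0 \pmod 4,\\ \bar a_{2i}(8n+5)&\equiv 0 \pmod 4, & \bar a_{2i}(8n+7)&\equiv 0 \pmod 8. \end{align*}
   Context: For an integer $k\geq 1$ let $f_k:=\prod_{n\geq 1}(1-q^{kn})$. For an integer $c\geq1$, the generalized overcubic partition function $\bar a_c(n)$ is defined by the generating function $\sum_{n\geq 0}\bar a_c(n)q^n=\dfrac{f_4^{c-1}}{f_1^2f_2^{2c-3}}$. *)

theory Defs
  imports "HOL-Computational_Algebra.Formal_Power_Series" "HOL-Number_Theory.Cong"
begin

text \<open>f_k = prod_{n>=1} (1 - q^(k n)) as a formal power series over int.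
  For k >= 1 the m-th coefficient of the infinite product equals the m-th
  coefficient of the finite product over n = 1..m.\<close>
definition euler_fps :: "nat \<Rightarrow> int fps" where
  "euler_fps k = Abs_fps (\<lambda>m. fps_nth (\<Prod>j\<in>{1..m}. (1 - fps_X ^ (k * j) :: int fps)) m)"

text \<open>Generating function f_4^(c-1) / (f_1^2 f_2^(2c-3)); all f_k have constant
  term 1, so the inverse is the (two-sided) inverse with constant term 1.
  For c = 1 the exponent 2c-3 = -1, i.e. the factor f_2 moves to the numerator.\<close>
definition overcubic_gf :: "nat \<Rightarrow> int fps" where
  "overcubic_gf c =
     (if c = 1 then euler_fps 2 * fps_right_inverse (euler_fps 1 ^ 2) 1
      else euler_fps 4 ^ (c - 1) *
           fps_right_inverse (euler_fps 1 ^ 2 * euler_fps 2 ^ (2 * c - 3)) 1)"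

definition abar :: "nat \<Rightarrow> nat \<Rightarrow> int" where
  "abar c n = fps_nth (overcubic_gf c) n"

end

theory Submission
  imports Defs
begin


fun qb :: "'a::comm_ring_1 \<Rightarrow> nat \<Rightarrow> nat \<Rightarrow> 'a" where
  "qb Q 0 j = (if j = 0 then 1 else 0)"
| "qb Q (Suc N) 0 = 1"
| "qb Q (Suc N) (Suc j) = qb Q N j + Q^(Suc j) * qb Q N (Suc j)"

lemma qb_0 [simp]: "qb Q N 0 = 1" by (cases N) auto

lemma qb_big: "N < j \<Longrightarrow> qb Q N j = 0"
  by (induction Q N j rule: qb.induct) auto

lemma qb_rec: "qb Q (Suc N) j = (if j = 0 then 0 else qb Q N (j - 1)) + Q^j * qb Q N j"
  by (cases j) auto

definition pch :: "'a::comm_ring_1 \<Rightarrow> nat \<Rightarrow> 'a" where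
  "pch Q a = (\<Prod>i\<in>{1..a}. (1 - Q^i))"

lemma pch_0 [simp]: "pch Q 0 = 1" by (simp add: pch_def)
lemma pch_Suc: "pch Q (Suc a) = pch Q a * (1 - Q^(Suc a))"
  by (simp add: pch_def prod.nat_ivl_Suc')

lemma qb_prod: "j \<le> N \<Longrightarrow> qb Q N j * pch Q j * pch Q (N - j) = pch Q N"
proof (induction N arbitrary: j)
  case 0 then show ?case by simp
next
  case (Suc N)
  show ?case
  proof (cases j)
    case 0 then show ?thesis by simp
  next
    case (Suc j')
    have j': "j' \<le> N" using Suc.prems Suc by simp
    have t1: "qb Q N j' * pch Q (Suc j') * pch Q (Suc N - Suc j') = pch Q N * (1 - Q^(Suc j'))"
    proof -
      have "qb Q N j' * pch Q (Suc j') * pch Q (Suc N - Suc j') = (qb Q N j' * pch Q j' * pch Q (N - j')) * (1 - Q^(Suc j'))"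
        by (simp add: pch_Suc algebra_simps)
      then show ?thesis using Suc.IH[OF j'] by simp
    qed
    have t2: "Q^(Suc j') * qb Q N (Suc j') * pch Q (Suc j') * pch Q (Suc N - Suc j')
            = Q^(Suc j') * pch Q N * (1 - Q^(N - j'))"
    proof (cases "j' = N")
      case True then show ?thesis by (simp add: qb_big)
    next
      case False
      then have "Suc j' \<le> N" using j' by simp
      have e: "Suc N - Suc j' = Suc (N - Suc j')" using \<open>Suc j' \<le> N\<close> by simp
      have e2: "Suc (N - Suc j') = N - j'" using \<open>Suc j' \<le> N\<close> by simp
      have p: "pch Q (Suc N - Suc j') = pch Q (N - Suc j') * (1 - Q^(N - j'))"
        by (metis e e2 pch_Suc)
      have "Q^(Suc j') * qb Q N (Suc j') * pch Q (Suc j') * pch Q (Suc N - Suc j')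
          = Q^(Suc j') * (qb Q N (Suc j') * pch Q (Suc j') * pch Q (N - Suc j')) * (1 - Q^(N - j'))"
        unfolding p by (simp only: mult_ac)
      then show ?thesis using Suc.IH[OF \<open>Suc j' \<le> N\<close>] by simp
    qed
    have "Suc j' + (N - j') = Suc N" using j' by simp
    then have "Q^(Suc j') * Q^(N - j') = Q^(Suc N)"
      by (metis power_add)
    have sp: "qb Q (Suc N) (Suc j') * pch Q (Suc j') * pch Q (Suc N - Suc j')
       = qb Q N j' * pch Q (Suc j') * pch Q (Suc N - Suc j')
       + Q^(Suc j') * qb Q N (Suc j') * pch Q (Suc j') * pch Q (Suc N - Suc j')"
      by (simp only: qb.simps distrib_right)
    have r: "pch Q N * (1 - Q^(Suc j')) + Q^(Suc j') * pch Q N * (1 - Q^(N - j'))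
        = pch Q N * (1 - Q^(Suc j') * Q^(N - j'))"
      by (simp add: algebra_simps)
    show ?thesis unfolding Suc sp t1 t2 r \<open>Q^(Suc j') * Q^(N - j') = Q^(Suc N)\<close>
      by (simp add: pch_Suc)
  qed
qed

definition Pod :: "'a::comm_ring_1 \<Rightarrow> nat \<Rightarrow> 'a" where
  "Pod x n = (\<Prod>i<n. (1 - x^(2*i+1)))"

lemma cauchy: "(\<Prod>i<n. (1 + z * x^(2*i))) = (\<Sum>j\<le>n. x^(j*(j-1)) * qb (x^2) n j * z^j)"
proof (induction n arbitrary: z)
  case 0 then show ?case by simp
next
  case (Suc n)
  have "(\<Prod>i<Suc n. (1 + z * x^(2*i))) = (1 + z) * (\<Prod>i<n. (1 + (z * x^2) * x^(2*i)))"
  proof -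
    have "\<And>i. z * x^(2*Suc i) = (z*x^2) * x^(2*i)"
      by (simp add: power_add[symmetric] mult.assoc)
    then show ?thesis by (subst prod.lessThan_Suc_shift) simp
  qed
  also have "\<dots> = (1 + z) * (\<Sum>j\<le>n. x^(j*(j-1)) * qb (x^2) n j * (z*x^2)^j)"
    using Suc.IH by simp
  finally have L: "(\<Prod>i<Suc n. (1 + z * x^(2*i))) = (1 + z) * (\<Sum>j\<le>n. x^(j*(j-1)) * qb (x^2) n j * (z*x^2)^j)" .
  have "(\<Sum>j\<le>Suc n. x^(j*(j-1)) * qb (x^2) (Suc n) j * z^j)
     = (\<Sum>j\<le>Suc n. x^(j*(j-1)) * (if j = 0 then 0 else qb (x^2) n (j - 1)) * z^j)
     + (\<Sum>j\<le>Suc n. x^(j*(j-1)) * ((x^2)^j * qb (x^2) n j) * z^j)"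
    by (simp add: qb_rec algebra_simps sum.distrib)
  also have "(\<Sum>j\<le>Suc n. x^(j*(j-1)) * (if j = 0 then 0 else qb (x^2) n (j - 1)) * z^j)
      = (\<Sum>j\<le>n. x^((Suc j)*j) * qb (x^2) n j * z^(Suc j))"
    by (subst sum.atMost_Suc_shift) simp
  also have "\<dots> = z * (\<Sum>j\<le>n. x^(j*(j-1)) * qb (x^2) n j * (z*x^2)^j)"
  proof -
    have "\<And>j. x^((Suc j)*j) = x^(j*(j-1)) * (x^2)^j"
    proof -
      fix j :: nat
      have "(Suc j)*j = j*(j-1) + 2*j" by (cases j) auto
      then show "x^((Suc j)*j) = x^(j*(j-1)) * (x^2)^j" by (metis power_add power_mult)
    qed
    then show ?thesis by (simp add: sum_distrib_left power_mult_distrib algebra_simps)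
  qed
  also have "(\<Sum>j\<le>Suc n. x^(j*(j-1)) * ((x^2)^j * qb (x^2) n j) * z^j)
      = (\<Sum>j\<le>n. x^(j*(j-1)) * qb (x^2) n j * (z*x^2)^j)"
    by (simp add: qb_big power_mult_distrib algebra_simps)
  finally show ?case using L by (simp add: algebra_simps)
qed

definition T :: "'a::comm_ring_1 \<Rightarrow> nat \<Rightarrow> nat \<Rightarrow> 'a" where
  "T x m n = (\<Sum>j\<le>m+n. (-1)^(j+m) * x^(nat ((int j - int m)^2)) * qb (x^2) (m+n) j)"

lemma T0: "T x 0 n = Pod x n"
proof -
  have "\<And>i. 1 - x^(2*i+1) = 1 + (-x) * x^(2*i)"
    by (simp only: power_add power_one_right mult_minus_left diff_conv_add_uminus mult.commute)
  then have "Pod x n = (\<Prod>i<n. (1 + (-x) * x^(2*i)))"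
    unfolding Pod_def by (intro prod.cong) auto
  also have "\<dots> = (\<Sum>j\<le>n. x^(j*(j-1)) * qb (x^2) n j * (-x)^j)" by (rule cauchy)
  also have "\<dots> = T x 0 n"
    unfolding T_def add_0 add_0_right
  proof (intro sum.cong refl)
    fix j
    have a: "nat ((int j - int 0)^2) = j^2" by (metis diff_zero nat_int of_nat_0 of_nat_power)
    have b: "j*(j-1) + j = j^2" by (cases j) (simp_all add: power2_eq_square)
    have c: "x^(j*(j-1)) * (-x)^j = (-1)^j * x^(j*(j-1) + j)"
      unfolding power_minus[of x j] power_add by (simp only: mult_ac)
    have "x^(j*(j-1)) * qb (x^2) n j * (-x)^j = (x^(j*(j-1)) * (-x)^j) * qb (x^2) n j"
      by (simp only: mult_ac)
    also have "\<dots> = (-1)^j * x^(nat ((int j - int 0)^2)) * qb (x^2) n j"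
      unfolding c a b by simp
    finally show "x^(j*(j-1)) * qb (x^2) n j * (-x)^j = (-1)^j * x^(nat ((int j - int 0)^2)) * qb (x^2) n j" .
  qed
  finally show ?thesis by simp
qed

lemma TSuc: "T x (Suc m) n = (1 - x^(2*m+1)) * T x m n"
proof -
  let ?N = "m + n"
  let ?s = "\<lambda>j. (-1)^(j+Suc m) * x^(nat ((int j - int (Suc m))^2))"
  have S0: "T x (Suc m) n = (\<Sum>j\<le>Suc ?N. ?s j * (if j = 0 then 0 else qb (x^2) ?N (j - 1)))
       + (\<Sum>j\<le>Suc ?N. ?s j * ((x^2)^j * qb (x^2) ?N j))"
    unfolding T_def by (simp only: add_Suc qb_rec distrib_left sum.distrib)
  have S1: "(\<Sum>j\<le>Suc ?N. ?s j * (if j = 0 then 0 else qb (x^2) ?N (j - 1))) = T x m n"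
    by (subst sum.atMost_Suc_shift) (simp add: T_def)
  have S2a: "(\<Sum>j\<le>Suc ?N. ?s j * ((x^2)^j * qb (x^2) ?N j))
      = (\<Sum>j\<le>?N. ?s j * ((x^2)^j * qb (x^2) ?N j))"
    by (simp add: qb_big)
  have S2b: "(\<Sum>j\<le>?N. ?s j * ((x^2)^j * qb (x^2) ?N j)) = (- (x^(2*m+1))) * T x m n"
    unfolding T_def sum_distrib_left
  proof (intro sum.cong refl)
    fix j
    have e: "nat ((int j - int (Suc m))^2) + 2*j = nat ((int j - int m)^2) + (2*m+1)"
    proof -
      have "(int j - int (Suc m))^2 + 2*int j = (int j - int m)^2 + (2*int m+1)"
        by (simp add: power2_eq_square algebra_simps)
      then have "int (nat ((int j - int (Suc m))^2) + 2*j) = int (nat ((int j - int m)^2) + (2*m+1))"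
        by simp
      then show ?thesis by (simp only: of_nat_eq_iff)
    qed
    have h: "x^(nat ((int j - int (Suc m))^2)) * (x^2)^j = x^(nat ((int j - int m)^2)) * x^(2*m+1)"
      using e by (metis power_add power_mult)
    have "?s j * (x^2)^j = (- (x^(2*m+1))) * ((-1)^(j+m) * x^(nat ((int j - int m)^2)))"
    proof -
      have "(-1::'a)^(j+Suc m) = - ((-1)^(j+m))" by simp
      then show ?thesis using h by (simp only: mult_ac mult_minus_left mult_minus_right)
    qed
    then show "?s j * ((x^2)^j * qb (x^2) ?N j) = (- (x^(2*m+1))) * ((-1)^(j+m) * x^(nat ((int j - int m)^2)) * qb (x^2) (m+n) j)"
      by (metis (no_types, lifting) mult.assoc)
  qed
  show ?thesis unfolding S0 S1 S2a S2b by (simp add: left_diff_distrib)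
qed

lemma Tmn: "T x m n = Pod x m * Pod x n"
  by (induction m) (simp_all add: T0 TSuc Pod_def algebra_simps)

lemma Pod_Suc: "Pod x (Suc n) = Pod x n * (1 - x^(2*n+1))"
  by (simp add: Pod_def)

lemma Pod_pch: "Pod x n * pch (x^2) n = pch x (2*n)"
proof (induction n)
  case 0 then show ?case by (simp add: Pod_def)
next
  case (Suc n)
  have a: "pch x (2 * Suc n) = pch x (2*n) * (1 - x^(2*n+1)) * (1 - x^(2*n+2))"
    using pch_Suc[of x "2*n"] pch_Suc[of x "Suc (2*n)"] by simp
  have "(x^2)^(Suc n) = x^(2*Suc n)" by (simp only: power_mult)
  also have "2 * Suc n = 2*n+2" by simp
  finally have "(x^2)^(Suc n) = x^(2*n+2)" .
  then have b: "pch (x^2) (Suc n) = pch (x^2) n * (1 - x^(2*n+2))"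
    by (simp add: pch_Suc)
  show ?case unfolding a b Pod_Suc Suc.IH[symmetric] by (simp add: algebra_simps)
qed



definition cg :: "nat \<Rightarrow> int fps \<Rightarrow> int fps \<Rightarrow> bool" where
  "cg N P Q \<longleftrightarrow> fps_X^N dvd (P - Q)"

lemma X_pow_dvd_iff: "(fps_X^N dvd (f::int fps)) \<longleftrightarrow> (\<forall>i<N. fps_nth f i = 0)"
proof
  assume "fps_X^N dvd f"
  then obtain g where "f = fps_X^N * g" by (auto elim: dvdE)
  then show "\<forall>i<N. fps_nth f i = 0" by (simp add: fps_X_power_mult_nth)
next
  assume h: "\<forall>i<N. fps_nth f i = 0"
  have "f = fps_X^N * Abs_fps (\<lambda>i. fps_nth f (i+N))"
    by (rule fps_ext) (simp add: fps_X_power_mult_nth h)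
  then show "fps_X^N dvd f" by (metis dvd_triv_left)
qed

lemma cg_iff: "cg N P Q \<longleftrightarrow> (\<forall>i<N. fps_nth P i = fps_nth Q i)"
  by (simp add: cg_def X_pow_dvd_iff)

lemma cg_refl[simp]: "cg N P P" by (simp add: cg_iff)
lemma cg_sym: "cg N P Q \<Longrightarrow> cg N Q P" by (simp add: cg_iff)
lemma cg_trans: "cg N P Q \<Longrightarrow> cg N Q R \<Longrightarrow> cg N P R" by (simp add: cg_iff)
lemma cg_add: "cg N P Q \<Longrightarrow> cg N P' Q' \<Longrightarrow> cg N (P + P') (Q + Q')"
  unfolding cg_def by (metis add_diff_add dvd_add)
lemma cg_mult: "cg N P Q \<Longrightarrow> cg N P' Q' \<Longrightarrow> cg N (P * P') (Q * Q')"
proof -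
  assume a: "cg N P Q" and b: "cg N P' Q'"
  have "P * P' - Q * Q' = P * (P' - Q') + (P - Q) * Q'" by (simp add: algebra_simps)
  then show ?thesis using a b unfolding cg_def by (metis dvd_add dvd_mult dvd_mult2)
qed
lemma cg_sum: "(\<And>j. j \<in> A \<Longrightarrow> cg N (f j) (g j)) \<Longrightarrow> cg N (\<Sum>j\<in>A. f j) (\<Sum>j\<in>A. g j)"
  unfolding cg_def by (simp add: sum_subtractf[symmetric] dvd_sum)
lemma cg_cancel:
  assumes "cg N (A * U) (B * U)" "fps_nth U 0 = 1"
  shows "cg N A B"
proof -
  have inv: "U * fps_right_inverse U 1 = 1" by (rule fps_right_inverse) (simp add: assms(2))
  have "fps_X^N dvd (A * U - B * U) * fps_right_inverse U 1"
    using assms(1) unfolding cg_def by (rule dvd_mult2)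
  also have "(A * U - B * U) * fps_right_inverse U 1 = A - B"
    by (metis inv left_diff_distrib mult.assoc mult.right_neutral)
  finally show ?thesis unfolding cg_def .
qed
lemma cg_zero: "fps_X^N dvd P \<Longrightarrow> cg N P 0" by (simp add: cg_def)

lemma fprod_cg:
  assumes k: "k \<ge> 1" and mn: "m \<le> n"
  shows "cg (Suc m) (\<Prod>j\<in>{1..n}. (1 - fps_X^(k*j) :: int fps)) (\<Prod>j\<in>{1..m}. (1 - fps_X^(k*j)))"
  using mn
proof (induction n)
  case 0 then show ?case by simp
next
  case (Suc n)
  show ?case
  proof (cases "m = Suc n")
    case True then show ?thesis by simp
  next
    case False
    then have "m \<le> n" using Suc.prems by simp
    have "Suc m \<le> k * Suc n" using \<open>m \<le> n\<close> k
      by (metis Suc_le_mono le_trans mult_le_mono1 mult_1)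
    then have "fps_X^(Suc m) dvd (fps_X^(k * Suc n) :: int fps)" by (rule le_imp_power_dvd)
    then have "cg (Suc m) (1 - fps_X^(k * Suc n)) 1" unfolding cg_def by simp
    from cg_mult[OF Suc.IH[OF \<open>m \<le> n\<close>] this]
    show ?thesis by (simp add: prod.nat_ivl_Suc')
  qed
qed

lemma pch_X: "pch (fps_X^k) n = (\<Prod>j\<in>{1..n}. (1 - fps_X^(k*j) :: int fps))"
  by (simp add: pch_def power_mult)

lemma euler_cg:
  assumes k: "k \<ge> 1" and dn: "d \<le> n"
  shows "cg (Suc d) (euler_fps k) (pch (fps_X^k) n)"
  unfolding cg_iff
proof (intro allI impI)
  fix i assume "i < Suc d"
  then have "i \<le> n" using dn by simp
  have "fps_nth (euler_fps k) i = fps_nth (\<Prod>j\<in>{1..i}. (1 - fps_X^(k*j) :: int fps)) i"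
    by (simp add: euler_fps_def)
  also have "\<dots> = fps_nth (\<Prod>j\<in>{1..n}. (1 - fps_X^(k*j) :: int fps)) i"
    using fprod_cg[OF k \<open>i \<le> n\<close>] unfolding cg_iff by simp
  finally show "fps_nth (euler_fps k) i = fps_nth (pch (fps_X^k) n) i" by (simp add: pch_X)
qed

lemma pch_nth0: "fps_nth (P::int fps) 0 = 0 \<Longrightarrow> fps_nth (pch P a) 0 = 1"
  by (induction a) (simp_all add: pch_Suc fps_nth_power_0)

lemma euler_nth0: "fps_nth (euler_fps k) 0 = 1"
  by (simp add: euler_fps_def)

definition th :: "nat \<Rightarrow> int fps" where
  "th k = euler_fps k ^ 2 * fps_right_inverse (euler_fps (2*k)) 1"

lemma th_eq: "euler_fps (2*k) * th k = euler_fps k ^ 2"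
proof -
  have "euler_fps (2*k) * fps_right_inverse (euler_fps (2*k)) 1 = 1"
    by (rule fps_right_inverse) (simp add: euler_nth0)
  then show ?thesis unfolding th_def by (metis mult.left_commute mult.right_neutral)
qed

lemma th_nth0: "fps_nth (th k) 0 = 1"
  by (simp add: th_def euler_nth0 fps_nth_power_0)



definition Th :: "nat \<Rightarrow> nat \<Rightarrow> int fps" where
  "Th k d = (\<Sum>j\<le>2*(2*d). if k * nat ((int j - int (2*d))^2) \<le> d
      then fps_const ((-1)^(j+2*d)) * fps_X^(k * nat ((int j - int (2*d))^2)) else 0)"

lemma neg1_fps: "((-1)::int fps)^p = fps_const ((-1)^p)"
  by (simp flip: fps_const_power fps_const_neg)

lemma abs_le_sq: "\<bar>a::int\<bar> \<le> a^2"
proof (cases "a = 0")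
  case False
  then have "1 \<le> \<bar>a\<bar>" by simp
  then have "\<bar>a\<bar> * 1 \<le> \<bar>a\<bar> * \<bar>a\<bar>" by (intro mult_left_mono) auto
  then show ?thesis by (simp add: power2_eq_square abs_mult[symmetric])
qed simp

lemma th_trunc:
  assumes k: "k \<ge> 1"
  shows "cg (Suc d) (th k) (Th k d)"
proof -
  define n where "n = 2*d"
  define x :: "int fps" where "x = fps_X^k"
  define Q where "Q = x^2"
  have QX: "Q = fps_X^(2*k)" unfolding Q_def x_def by (simp add: power_mult[symmetric] mult.commute)
  have k2: "2*k \<ge> 1" using k by simp
  have EQ: "\<And>a. d \<le> a \<Longrightarrow> cg (Suc d) (euler_fps (2*k)) (pch Q a)"
    unfolding QX by (rule euler_cg[OF k2])
  have FQ: "cg (Suc d) (euler_fps k) (pch x (2*n))"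
    unfolding x_def by (rule euler_cg[OF k]) (simp add: n_def)
  have Q0: "\<And>a. fps_nth (pch Q a) 0 = 1"
    by (rule pch_nth0) (use k in \<open>simp add: QX\<close>)
  have c1: "cg (Suc d) (th k) (T x n n * pch Q n)"
  proof -
    have a: "T x n n * pch Q n * pch Q n = pch x (2*n) * pch x (2*n)"
      unfolding Tmn Q_def Pod_pch[symmetric] by (simp only: mult_ac)
    have b: "cg (Suc d) (pch x (2*n) * pch x (2*n)) (euler_fps (2*k) * th k)"
      unfolding th_eq power2_eq_square by (intro cg_mult cg_sym[OF FQ])
    have c: "cg (Suc d) (euler_fps (2*k) * th k) (pch Q n * th k)"
      by (intro cg_mult EQ cg_refl) (simp add: n_def)
    have "cg (Suc d) ((T x n n * pch Q n) * pch Q n) (th k * pch Q n)"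
      using cg_trans[OF b c] unfolding a by (simp add: mult.commute)
    from cg_cancel[OF this Q0] show ?thesis by (rule cg_sym)
  qed
  have c2: "cg (Suc d) (T x n n * pch Q n) (Th k d)"
  proof -
    have "T x n n * pch Q n = (\<Sum>j\<le>2*n. (-1)^(j+n) * x^(nat ((int j - int n)^2)) * (qb Q (2*n) j * pch Q n))"
      unfolding T_def Q_def sum_distrib_right by (simp add: mult_2 mult.assoc)
    also have "cg (Suc d) \<dots> (Th k d)"
      unfolding Th_def n_def[symmetric]
    proof (rule cg_sum)
      fix j assume j: "j \<in> {..2*n}"
      define e where "e = nat ((int j - int n)^2)"
      have xe: "x^e = fps_X^(k*e)" unfolding x_def by (simp add: power_mult)
      have R: "cg (Suc d) ((-1)^(j+n) * x^e * (qb Q (2*n) j * pch Q n))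
              (if k * e \<le> d then fps_const ((-1)^(j+n)) * fps_X^(k * e) else 0)"
      proof (cases "k * e \<le> d")
        case True
        have "e \<le> k * e" using k by simp
        then have "e \<le> d" using True by linarith
        then have "(int j - int n)^2 \<le> int d" unfolding e_def by simp
        moreover have "\<bar>int j - int n\<bar> \<le> (int j - int n)^2" by (rule abs_le_sq)
        ultimately have "\<bar>int j - int n\<bar> \<le> int d" by linarith
        then have jd: "d \<le> j" and jd2: "d \<le> 2*n - j" and jn: "j \<le> 2*n" using j by (auto simp: n_def)
        have pj: "cg (Suc d) (pch Q j) (pch Q n)"
          using cg_trans[OF cg_sym[OF EQ[OF jd]] EQ] by (simp add: n_def)
        have pj2: "cg (Suc d) (pch Q (2*n - j)) (pch Q n)"
          using cg_trans[OF cg_sym[OF EQ[OF jd2]] EQ] by (simp add: n_def)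
        have p2: "cg (Suc d) (pch Q (2*n)) (pch Q n)"
          using cg_trans[OF cg_sym[OF EQ] EQ] by (simp add: n_def)
        have "cg (Suc d) (qb Q (2*n) j * pch Q n * pch Q n) (qb Q (2*n) j * pch Q j * pch Q (2*n - j))"
          by (intro cg_mult cg_refl cg_sym[OF pj] cg_sym[OF pj2])
        then have "cg (Suc d) ((qb Q (2*n) j * pch Q n) * pch Q n) (1 * pch Q n)"
          unfolding qb_prod[OF jn] using p2 cg_trans by (simp add: mult.assoc)
        from cg_cancel[OF this Q0]
        have "cg (Suc d) ((-1)^(j+n) * x^e * (qb Q (2*n) j * pch Q n)) ((-1)^(j+n) * x^e * 1)"
          by (intro cg_mult cg_refl)
        then show ?thesis using True by (simp add: xe neg1_fps)
      next
        case False
        then have "fps_X^(Suc d) dvd (fps_X^(k*e) :: int fps)" by (intro le_imp_power_dvd) simp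
        then have "fps_X^(Suc d) dvd (-1)^(j+n) * x^e * (qb Q (2*n) j * pch Q n)"
          unfolding xe by (metis dvd_mult dvd_mult2)
        then show ?thesis using False by (simp add: cg_zero)
      qed
      then show "cg (Suc d) ((-1)^(j+n) * x^(nat ((int j - int n)^2)) * (qb Q (2*n) j * pch Q n))
              (if k * nat ((int j - int n)^2) \<le> d
                 then fps_const ((-1)^(j+n)) * fps_X^(k * nat ((int j - int n)^2)) else 0)"
        unfolding e_def .
    qed
    finally show ?thesis .
  qed
  show ?thesis by (rule cg_trans[OF c1 c2])
qed



lemma Th_nth: "fps_nth (Th k d) t = (\<Sum>j\<le>2*(2*d). if k * nat ((int j - int (2*d))^2) \<le> d
      then (-1)^(j+2*d) * (if t = k * nat ((int j - int (2*d))^2) then 1 else 0) else 0)"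
  unfolding Th_def fps_sum_nth by (intro sum.cong refl) auto

lemma th_nth_Th: "k \<ge> 1 \<Longrightarrow> fps_nth (th k) t = fps_nth (Th k t) t"
  using th_trunc[of k t] unfolding cg_iff by simp

lemma th_support:
  assumes k: "k \<ge> 1" and nz: "fps_nth (th k) t \<noteq> 0"
  shows "\<exists>r. t = k * r^2"
proof -
  define n where "n = 2*t"
  have "fps_nth (Th k t) t \<noteq> 0" using nz th_nth_Th[OF k] by simp
  then have "(\<Sum>j\<le>2*n. if k * nat ((int j - int n)^2) \<le> t
      then (-1)^(j+n) * (if t = k * nat ((int j - int n)^2) then 1 else 0) else 0) \<noteq> (0::int)"
    unfolding Th_nth n_def .
  then obtain j where "j \<in> {..2*n}" and "(if k * nat ((int j - int n)^2) \<le> t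
      then (-1)^(j+n) * (if t = k * nat ((int j - int n)^2) then 1 else 0) else 0) \<noteq> (0::int)"
    by (rule sum.not_neutral_contains_not_neutral)
  then have "t = k * nat ((int j - int n)^2)" by (auto split: if_splits)
  also have "nat ((int j - int n)^2) = (nat \<bar>int j - int n\<bar>)^2"
    by (simp add: nat_power_eq[symmetric])
  finally show ?thesis by blast
qed

lemma th_even:
  assumes k: "k \<ge> 1" and t: "t > 0"
  shows "even (fps_nth (th k) t)"
proof -
  define n where "n = 2*t"
  define g where "g j = (if k * nat ((int j - int n)^2) \<le> t
      then (-1)^(j+n) * (if t = k * nat ((int j - int n)^2) then 1 else 0) else (0::int))" for j
  have c: "fps_nth (th k) t = (\<Sum>j\<le>2*n. g j)"
    unfolding th_nth_Th[OF k] Th_nth g_def n_def ..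
  have gn: "g n = 0" using t by (simp add: g_def)
  have grefl: "g (2*n - j) = g j" if "j \<le> 2*n" for j
  proof -
    have a: "int (2*n - j) - int n = - (int j - int n)" using that by simp
    have b: "even (2*n - j + n) = even (j + n)" using that by (simp add: n_def)
    have sg: "((-1::int)^(2*n - j + n)) = (-1)^(j+n)"
      using b by (simp add: minus_one_power_iff)
    have a2: "(int (2*n - j) - int n)^2 = (int j - int n)^2" unfolding a by (rule power2_minus)
    show ?thesis unfolding g_def a2 using sg by simp
  qed
  have split: "{..2*n} = {..<n} \<union> insert n {Suc n..2*n}" by auto
  have "(\<Sum>j\<le>2*n. g j) = (\<Sum>j<n. g j) + (g n + (\<Sum>j\<in>{Suc n..2*n}. g j))"
    unfolding split by (subst sum.union_disjoint) auto
  also have "(\<Sum>j\<in>{Suc n..2*n}. g j) = (\<Sum>j<n. g (2*n - j))"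
    by (rule sum.reindex_bij_witness[of _ "\<lambda>j. 2*n - j" "\<lambda>j. 2*n - j"]) auto
  also have "\<dots> = (\<Sum>j<n. g j)"
    by (intro sum.cong refl) (auto intro!: grefl)
  finally have "(\<Sum>j\<le>2*n. g j) = 2 * (\<Sum>j<n. g j)" using gn by simp
  then show ?thesis unfolding c by simp
qed



lemma q8: "(q::nat) < 8 \<Longrightarrow> q^2 mod 8 \<in> {0,1,4}"
proof -
  assume "q < 8"
  then have "q \<in> {0,1,2,3,4,5,6,7}" by auto
  then show ?thesis by (auto simp: power2_eq_square)
qed
lemma sq_mod8: "(r::nat)^2 mod 8 \<in> {0,1,4}"
proof -
  have "r^2 mod 8 = (r mod 8)^2 mod 8" by (simp add: power_mod)
  then show ?thesis using q8[of "r mod 8"] by simp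
qed
lemma sq2_mod8: "(2*(r::nat)^2) mod 8 \<in> {0,2}"
proof -
  have "(2*r^2) mod 8 = (2 * (r^2 mod 8)) mod 8" by (simp add: mod_mult_right_eq)
  then show ?thesis using sq_mod8[of r] by auto
qed

definition sup8 :: "int fps \<Rightarrow> nat set \<Rightarrow> bool" where
  "sup8 P S \<longleftrightarrow> (\<forall>t. fps_nth P t \<noteq> 0 \<longrightarrow> t mod 8 \<in> S)"

lemma sup8_zeroI: "sup8 P S \<Longrightarrow> t mod 8 \<notin> S \<Longrightarrow> fps_nth P t = 0"
  unfolding sup8_def by blast

lemma sup8_mono: "sup8 P S \<Longrightarrow> S \<subseteq> S' \<Longrightarrow> sup8 P S'"
  unfolding sup8_def by blast

lemma sup8_add: "sup8 P S \<Longrightarrow> sup8 Q S \<Longrightarrow> sup8 (P + Q) S"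
  unfolding sup8_def by (metis add.left_neutral fps_add_nth)

lemma sup8_uminus: "sup8 P S \<Longrightarrow> sup8 (- P) S"
  unfolding sup8_def by simp

lemma numeral_mult_nth: "fps_nth (numeral w * P) t = numeral w * fps_nth P t"
  by (simp add: numeral_fps_const)

lemma sup8_num: "sup8 P S \<Longrightarrow> sup8 (numeral w * P) S"
  unfolding sup8_def by (simp add: numeral_mult_nth)

lemma sup8_mult:
  assumes "sup8 P S1" "sup8 Q S2" "\<forall>a\<in>S1. \<forall>b\<in>S2. (a+b) mod 8 \<in> S"
  shows "sup8 (P * Q) S"
  unfolding sup8_def
proof (intro allI impI)
  fix t assume "fps_nth (P * Q) t \<noteq> 0"
  then have "(\<Sum>i=0..t. fps_nth P i * fps_nth Q (t - i)) \<noteq> 0" by (simp add: fps_mult_nth)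
  then obtain i where i: "i \<in> {0..t}" and nz: "fps_nth P i * fps_nth Q (t - i) \<noteq> 0"
    by (rule sum.not_neutral_contains_not_neutral)
  have a: "i mod 8 \<in> S1" using nz assms(1) unfolding sup8_def by auto
  have b: "(t - i) mod 8 \<in> S2" using nz assms(2) unfolding sup8_def by auto
  have "t = i + (t - i)" using i by simp
  then have "t mod 8 = (i mod 8 + (t - i) mod 8) mod 8" by (metis mod_add_eq)
  then show "t mod 8 \<in> S" using a b assms(3) by simp
qed

definition halfs :: "int fps \<Rightarrow> int fps" where
  "halfs P = Abs_fps (\<lambda>t. if t = 0 then 0 else fps_nth P t div 2)"

lemma th_half: "k \<ge> 1 \<Longrightarrow> th k = 1 + 2 * halfs (th k)"
proof (rule fps_ext)
  fix t assume k: "k \<ge> 1"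
  show "fps_nth (th k) t = fps_nth (1 + 2 * halfs (th k)) t"
  proof (cases "t = 0")
    case True then show ?thesis by (simp add: th_nth0 halfs_def numeral_mult_nth)
  next
    case False
    then have "even (fps_nth (th k) t)" using th_even[OF k] by simp
    then show ?thesis using False by (simp add: halfs_def numeral_mult_nth)
  qed
qed

lemma halfs_sup:
  assumes k: "k \<ge> 1" and nz: "fps_nth (halfs (th k)) t \<noteq> 0"
  shows "\<exists>r. t = k * r^2"
proof -
  have "fps_nth (th k) t \<noteq> 0" using nz by (auto simp: halfs_def split: if_splits)
  then show ?thesis by (rule th_support[OF k])
qed

lemma supA: "sup8 (halfs (th 1)) {0,1,4}"
  unfolding sup8_def
proof (intro allI impI)
  fix t assume "fps_nth (halfs (th 1)) t \<noteq> 0"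
  then obtain r where "t = 1 * r^2" using halfs_sup[of 1] by auto
  then show "t mod 8 \<in> {0,1,4}" using sq_mod8[of r] by simp
qed

lemma supB: "sup8 (halfs (th 2)) {0,2}"
  unfolding sup8_def
proof (intro allI impI)
  fix t assume "fps_nth (halfs (th 2)) t \<noteq> 0"
  then obtain r where "t = 2 * r^2" using halfs_sup[of 2] by auto
  then show "t mod 8 \<in> {0,2}" using sq2_mod8[of r] by simp
qed

lemma Vpow:
  assumes B: "sup8 B {0,2}"
  shows "\<exists>Y0 Y1. (1 - 2*B + 4*B^2)^m = 1 + 2*(Y0 + 2*Y1) \<and> sup8 Y0 {0,2,4} \<and> sup8 Y1 {0,2,4,6}"
proof (induction m)
  case 0
  have "sup8 0 S" for S unfolding sup8_def by simp
  then show ?case by (intro exI[of _ 0]) simp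
next
  case (Suc m)
  then obtain Y0 Y1 where Y: "(1 - 2*B + 4*B^2)^m = 1 + 2*(Y0 + 2*Y1)"
    and s0: "sup8 Y0 {0,2,4}" and s1: "sup8 Y1 {0,2,4,6}" by blast
  define Z where "Z = -B + 2*B^2"
  have id: "(1 - 2*B + 4*B^2)^(Suc m) = 1 + 2*((-B + Y0) + 2*(B^2 + Y1 + Z*(Y0 + 2*Y1)))"
    unfolding power_Suc Y Z_def by (simp add: algebra_simps power2_eq_square)
  have e: "{0,2,4,6} \<subseteq> {0,2,4,6::nat}" by simp
  have sB2: "sup8 (B^2) {0,2,4,6}"
    unfolding power2_eq_square by (rule sup8_mult[OF B B]) auto
  have sZ: "sup8 Z {0,2,4,6}"
    unfolding Z_def
    by (intro sup8_add sup8_uminus sup8_num sB2 sup8_mono[OF B]) auto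
  have sY: "sup8 (Y0 + 2*Y1) {0,2,4,6}"
    by (intro sup8_add sup8_num s1 sup8_mono[OF s0]) auto
  have sZY: "sup8 (Z*(Y0 + 2*Y1)) {0,2,4,6}"
    by (rule sup8_mult[OF sZ sY]) auto
  have n0: "sup8 (-B + Y0) {0,2,4}"
    by (intro sup8_add sup8_uminus s0 sup8_mono[OF B]) auto
  have n1: "sup8 (B^2 + Y1 + Z*(Y0 + 2*Y1)) {0,2,4,6}"
    by (intro sup8_add sB2 s1 sZY)
  show ?case using id n0 n1 by blast
qed

lemma pow8: "\<exists>R. (1 + 8*(C::int fps))^m = 1 + 8*R"
proof (induction m)
  case 0 then show ?case by (intro exI[of _ 0]) simp
next
  case (Suc m)
  then obtain R where "(1 + 8*C)^m = 1 + 8*R" by blast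
  then have "(1 + 8*C)^(Suc m) = 1 + 8*(C + R + 8*C*R)" by (simp add: algebra_simps)
  then show ?case by blast
qed



lemma l1: "(1 - 2*A + 4*A^2) * (1 + 2*(A::'a::comm_ring_1)) = 1 + 8*A^3"
  by (simp add: algebra_simps power2_eq_square power3_eq_cube)
lemma l2: "(1 - 2*B + 4*B^2) * (1 + 2*(B::'a::comm_ring_1)) = 1 + 8*B^3"
  by (simp add: algebra_simps power2_eq_square power3_eq_cube)
lemma l3: "(L::'a::comm_ring_1) * (1 - 2*B + 4*B^2)^m * ((1 + 2*A) * (1 + 2*B)^m) = (L * (1 + 2*A)) * ((1 - 2*B + 4*B^2) * (1 + 2*B))^m"
  by (simp add: power_mult_distrib mult_ac)
lemma l4: "(1 + 8*(A::'a::comm_ring_1)^3) * (1 + 8*R) = 1 + 8*(A^3 + R + 8*A^3*R)"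
  by (simp add: algebra_simps)
lemma l5: "(G::'a::comm_ring_1) * U = 1 \<Longrightarrow> H = G * (H * U)"
  by (metis mult.left_commute mult_1_right)
lemma l6: "(H::'a::comm_ring_1) = G * (1 + 8*X) \<Longrightarrow> G = H - 8 * (G * X)"
  by (simp add: algebra_simps)
lemma l7: "(1 - 2*A + 4*A^2) * (1 + 2*(Y0 + 2*Y1)) = 1 - 2*A + 2*Y0 + 4*(A^2 + Y1 - A*Y0) + 8*(- A*Y1 + A^2*Y0 + 2*A^2*(Y1::'a::comm_ring_1))"
  by (simp add: algebra_simps power2_eq_square)
lemma l8: "(G::'a::comm_ring_1) = (1 - 2*A + 2*Y0 + 4*W + 8*K) - 8*X \<Longrightarrow> G = 1 - 2*A + 2*Y0 + 4*W + 8*(K - X)"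
  by (simp add: algebra_simps)

lemma main_decomp:
  assumes i: "i \<ge> 1"
  shows "\<exists>A Y0 W M. overcubic_gf (2*i) = 1 - 2*A + 2*Y0 + 4*W + 8*M \<and>
     sup8 A {0,1,4} \<and> sup8 Y0 {0,2,4} \<and> sup8 W {0,1,2,3,4,5,6}"
proof -
  define m where "m = 2*i - 1"
  define f1 where "f1 = euler_fps 1"
  define f2 where "f2 = euler_fps 2"
  define f4 where "f4 = euler_fps 4"
  define A where "A = halfs (th 1)"
  define B where "B = halfs (th 2)"
  have m1: "m \<ge> 1" using i by (simp add: m_def)
  have e1: "f1^2 = f2 * th 1" using th_eq[of 1] by (simp add: f1_def f2_def)
  have e2: "f2^2 = f4 * th 2" using th_eq[of 2] by (simp add: f2_def f4_def)
  define D where "D = f1^2 * f2^(2*(2*i) - 3)"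
  define U where "U = th 1 * th 2 ^ m"
  have G: "overcubic_gf (2*i) = f4^m * fps_right_inverse D 1"
    using i by (simp add: overcubic_gf_def m_def D_def f1_def f2_def f4_def)
  have ex: "2*(2*i) - 3 = 2*m - 1" using i by (simp add: m_def)
  have ex2: "Suc (2*m - 1) = 2*m" using m1 by simp
  have "f2 * f2^(2*(2*i) - 3) = f2^(2*m)"
    unfolding ex by (metis ex2 power_Suc)
  then have "D = th 1 * f2^(2*m)"
    unfolding D_def e1 by (metis mult.assoc mult.commute)
  also have "\<dots> = th 1 * (f4 * th 2)^m" unfolding power_mult e2 ..
  also have "\<dots> = f4^m * U" unfolding U_def power_mult_distrib by (simp only: mult_ac)
  finally have DD: "D = f4^m * U" .
  have D0: "fps_nth D 0 = 1"
    by (simp add: D_def f1_def f2_def euler_nth0 fps_nth_power_0)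
  have Dinv: "D * fps_right_inverse D 1 = 1" by (rule fps_right_inverse) (simp add: D0)
  have "overcubic_gf (2*i) * U = D * fps_right_inverse D 1"
    unfolding G DD by (simp only: mult_ac)
  then have GU: "overcubic_gf (2*i) * U = 1" using Dinv by simp
  have t1: "th 1 = 1 + 2*A" unfolding A_def by (rule th_half) simp
  have t2: "th 2 = 1 + 2*B" unfolding B_def by (rule th_half) simp
  obtain Y0 Y1 where Y: "(1 - 2*B + 4*B^2)^m = 1 + 2*(Y0 + 2*Y1)"
    and s0: "sup8 Y0 {0,2,4}" and s1: "sup8 Y1 {0,2,4,6}"
    using Vpow[OF supB[folded B_def]] by blast
  define L where "L = 1 - 2*A + 4*A^2"
  define H where "H = L * (1 - 2*B + 4*B^2)^m"
  have LA: "L * (1 + 2*A) = 1 + 8*A^3" unfolding L_def by (rule l1)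
  have VB: "(1 - 2*B + 4*B^2) * (1 + 2*B) = 1 + 8*B^3" by (rule l2)
  obtain R where R: "(1 + 8*B^3)^m = 1 + 8*R" using pow8 by blast
  have "H * U = (L * (1 + 2*A)) * ((1 - 2*B + 4*B^2) * (1 + 2*B))^m"
    unfolding H_def U_def t1 t2 by (rule l3)
  also have "\<dots> = 1 + 8*(A^3 + R + 8*A^3*R)" unfolding LA VB R by (rule l4)
  finally have HU: "H * U = 1 + 8*(A^3 + R + 8*A^3*R)" .
  define G where "G = overcubic_gf (2*i)"
  have "H = G * (H * U)" using GU unfolding G_def by (rule l5)
  then have HG: "G = H - 8 * (G * (A^3 + R + 8*A^3*R))" unfolding HU by (rule l6)
  define W where "W = A^2 + Y1 - A*Y0"
  define K where "K = - A*Y1 + A^2*Y0 + 2*A^2*Y1"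
  have HE: "H = 1 - 2*A + 2*Y0 + 4*W + 8*K"
    unfolding H_def Y L_def W_def K_def by (rule l7)
  have Gd: "G = 1 - 2*A + 2*Y0 + 4*W + 8*(K - G * (A^3 + R + 8*A^3*R))"
    using HG unfolding HE by (rule l8)
  have sA: "sup8 A {0,1,4}" unfolding A_def by (rule supA)
  have sW: "sup8 W {0,1,2,3,4,5,6}"
    unfolding W_def diff_conv_add_uminus power2_eq_square
    by (intro sup8_add sup8_uminus sup8_mult[OF sA sA] sup8_mono[OF s1] sup8_mult[OF sA s0]) auto
  show ?thesis using Gd sA s0 sW unfolding G_def by blast
qed

theorem theorem1p5:
  fixes n i :: nat
  assumes "i \<ge> 1"
  shows "[abar (2 * i) (4 * n + 3) = 0] (mod 4) \<and>
         [abar (2 * i) (8 * n + 6) = 0] (mod 4) \<and>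
         [abar (2 * i) (8 * n + 5) = 0] (mod 4) \<and>
         [abar (2 * i) (8 * n + 7) = 0] (mod 8)"
proof -
  obtain A Y0 W M where G: "overcubic_gf (2*i) = 1 - 2*A + 2*Y0 + 4*W + 8*M"
    and sA: "sup8 A {0,1,4}" and s0: "sup8 Y0 {0,2,4}" and sW: "sup8 W {0,1,2,3,4,5,6}"
    using main_decomp[OF assms] by blast
  have coef: "abar (2*i) t = - 2 * fps_nth A t + 2 * fps_nth Y0 t + 4 * fps_nth W t + 8 * fps_nth M t"
    if "t > 0" for t
    using that unfolding abar_def G by (simp add: numeral_mult_nth)
  have m4: "[abar (2*i) t = 0] (mod 4)" if "t mod 8 \<in> {3,5,6,7}" for t
  proof -
    have "t > 0" using that by (auto intro: Nat.gr0I)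
    have "fps_nth A t = 0" by (rule sup8_zeroI[OF sA]) (use that in auto)
    moreover have "fps_nth Y0 t = 0" by (rule sup8_zeroI[OF s0]) (use that in auto)
    ultimately have "abar (2*i) t = 4 * (fps_nth W t + 2 * fps_nth M t)"
      using coef[OF \<open>t > 0\<close>] by simp
    then show ?thesis by (simp add: cong_0_iff)
  qed
  have m8: "[abar (2*i) t = 0] (mod 8)" if "t mod 8 = 7" for t
  proof -
    have "t > 0" using that by (auto intro: Nat.gr0I)
    have "fps_nth A t = 0" by (rule sup8_zeroI[OF sA]) (use that in auto)
    moreover have "fps_nth Y0 t = 0" by (rule sup8_zeroI[OF s0]) (use that in auto)
    moreover have "fps_nth W t = 0" by (rule sup8_zeroI[OF sW]) (use that in auto)
    ultimately have "abar (2*i) t = 8 * fps_nth M t"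
      using coef[OF \<open>t > 0\<close>] by simp
    then show ?thesis by (simp add: cong_0_iff)
  qed
  have a: "(4*n+3) mod 8 \<in> {3,5,6,7}" by (cases "even n") (auto elim!: evenE oddE)
  have b: "(8*n+6) mod 8 \<in> {3,5,6,7}" by simp
  have c: "(8*n+5) mod 8 \<in> {3,5,6,7}" by simp
  have d: "(8*n+7) mod 8 = 7" by simp
  show ?thesis using m4[OF a] m4[OF b] m4[OF c] m8[OF d] by simp
qed

end
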